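(* For every finite input set $F\subset(K[x_1])[\tilde{\bm{x}}]\setminus K$, every run of the pseudo-eliminant algorithm described in the context terminates after finitely many steps.
   Context: $K$ is a field; $K[x_1,\dots,x_n]$ is regarded as $(K[x_1])[\tilde{\bm{x}}]$, $\tilde{\bm{x}}=(x_2,\dots,x_n)$, with a fixed monomial ordering $\succ$ on monomials in $\tilde{\bm{x}}$. For nonzero $f=\sum c_\alpha\tilde{\bm{x}}^\alpha$ ($c_\alpha\in K[x_1]$), $\operatorname{supp}f$ is the set of $\tilde{\bm{x}}^\alpha$ with $c_\alpha\ne0$, $\operatorname{lm}(f)$ its $\succ$-largest element, $\operatorname{lc}(f)\in K[x_1]$ its coefficient, $\operatorname{lt}(f)=\operatorname{lc}(f)\operatorname{lm}(f)$. Gcds in $K[x_1]$ are monic, $\operatorname{lcm}(a,b)=ab/\gcd(a,b)$. For $f,g\notin K[x_1]$, $S(f,g):=\frac{m\tilde{\bm{x}}^\gamma}{\operatorname{lt}(f)}f-\frac{m\tilde{\bm{x}}^\gamma}{\operatorname{lt}(g)}g$ with $m=\operatorname{lcm}(\operatorname{lc}f,\operatorname{lc}g)$, $\tilde{\bm{x}}^\gamma=\operatorname{lcm}(\operatorname{lm}f,\operatorname{lm}g)$. Pseudo-division of $S$ by a finite set $G\subset(K[x_1])[\tilde{\bm{x}}]\setminus K[x_1]$: starting with $h=S$, while $\operatorname{supp}h\cap\langle\operatorname{lm}(G)\rangle\neq\emptyset$, let $c_\alpha\tilde{\bm{x}}^\alpha$ be the term of $h$ whose monomial is the $\succ$-largest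 in this intersection, choose $b\in G$ with $\operatorname{lm}(b)\mid\tilde{\bm{x}}^\alpha$, put $m=\operatorname{lcm}(c_\alpha,\operatorname{lc}(b))$, $\mu=m/c_\alpha$ and replace $h$ by $\mu h-\frac{m\tilde{\bm{x}}^\alpha}{\operatorname{lt}(b)}b$. The final $h$ is the remainder $r$; the product $\lambda$ of the $\mu$'s is the multiplier. Algorithm. Input: finite $F\subset(K[x_1])[\tilde{\bm{x}}]\setminus K$. Initialize $G:=F\setminus K[x_1]$, $\Lambda:=\emptyset$, $\mathfrak{S}:=\emptyset$, and $f_0:=\gcd(F\cap K[x_1])$ if $F\cap K[x_1]\neq\emptyset$, else $f_0:=0$. Procedure $\mathcal{Q}(f,g)$ for $f\neq g$ in $G$: (i) if $\operatorname{lm}(f),\operatorname{lm}(g)$ are coprime, put $d=\gcd(\operatorname{lc}f,\operatorname{lc}g)$, add $d$ to $\Lambda$ if $d\notin K$, and do not form $S(f,g)$; (ii) else, if some $h\in G\setminus\{f,g\}$ has $\operatorname{lm}(h)\mid\operatorname{lcm}(\operatorname{lm}f,\operatorname{lm}g)$ and the triple $\{f,g,h\}$ has not been used in this way before, put $\lambda=\operatorname{lc}(h)/\gcd(\operatorname{lcm}(\operatorname{lc}f,\operatorname{lc}g),\operatorname{lc}h)$, add $\lambda$ to $\Lambda$ if $\lambda\notin K$, and do not form $S(f,g)$; (iii) otherwise add $S(f,g)$ to $\mathfrak{S}$. Apply $\mathcal{Q}$ to all pairs of $G$. Then, while $\mathfrak{S}\neq\emptyset$: take $S\in\mathfrak{S}$,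 pseudo-divide it by the current $G$ obtaining $\lambda,r$; add $\lambda$ to $\Lambda$ if $\lambda\notin K$; if $r\notin K[x_1]$, add $r$ to $G$ and apply $\mathcal{Q}(f,r)$ for every $f\in G\setminus\{r\}$; if $r\in K[x_1]\setminus K$, set $f_0:=\gcd(r,f_0)$ (with $\gcd(r,0)=r$); if $r=0$ do nothing; then delete $S$ from $\mathfrak{S}$. At the end set $\chi_\varepsilon:=f_0$, $B_\varepsilon:=G$, and for every $f\in B_\varepsilon$, if $d:=\gcd(\operatorname{lc}(f),\chi_\varepsilon)\notin K$, add $d$ to $\Lambda$. Output $\chi_\varepsilon$ (pseudo-eliminant), $B_\varepsilon$ (pseudo-basis) and $\Lambda$ (multiplier set). All choices (order of processing, choice of $h$, of $b$) are arbitrary. *)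

theory Defs
  imports "HOL-Library.Poly_Mapping" "HOL-Computational_Algebra.Computational_Algebra"
begin

(* Monomials in the variables x_2,...,x_n: exponent vectors (variable index => exponent). *)
type_synonym mon = "nat \<Rightarrow>\<^sub>0 nat"
(* Elements of (K[x_1])[x_2,...,x_n]: finitely supported maps monomial => coefficient in K[x_1]. *)
type_synonym 'k mpoly = "mon \<Rightarrow>\<^sub>0 'k poly"

definition monomial_order :: "(mon \<Rightarrow> mon \<Rightarrow> bool) \<Rightarrow> bool" where
  "monomial_order ord \<longleftrightarrow>
     (\<forall>a. \<not> ord a a) \<and>
     (\<forall>a b c. ord a b \<longrightarrow> ord b c \<longrightarrow> ord a c) \<and>
     (\<forall>a b. a \<noteq> b \<longrightarrow> ord a b \<or> ord b a) \<and>
     (\<forall>a b c. ord a b \<longrightarrow> ord (a + c) (b + c)) \<and>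
     (\<forall>a. a \<noteq> 0 \<longrightarrow> ord 0 a)"

definition mdvd :: "mon \<Rightarrow> mon \<Rightarrow> bool" where
  "mdvd s t \<longleftrightarrow> (\<forall>i. Poly_Mapping.lookup s i \<le> Poly_Mapping.lookup t i)"

definition mlcm :: "mon \<Rightarrow> mon \<Rightarrow> mon" where
  "mlcm s t = s + (t - s)"   (* pointwise maximum of exponents *)

definition mcoprime :: "mon \<Rightarrow> mon \<Rightarrow> bool" where
  "mcoprime s t \<longleftrightarrow> Poly_Mapping.keys s \<inter> Poly_Mapping.keys t = {}"

definition lm :: "(mon \<Rightarrow> mon \<Rightarrow> bool) \<Rightarrow> 'k::zero mpoly \<Rightarrow> mon" where
  "lm ord p = (THE m. m \<in> Poly_Mapping.keys p \<and> (\<forall>m' \<in> Poly_Mapping.keys p. m' \<noteq> m \<longrightarrow> ord m' m))"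

definition lc :: "(mon \<Rightarrow> mon \<Rightarrow> bool) \<Rightarrow> 'k::zero mpoly \<Rightarrow> 'k poly" where
  "lc ord p = Poly_Mapping.lookup p (lm ord p)"

definition inK1 :: "'k::zero mpoly \<Rightarrow> bool" where
  "inK1 p \<longleftrightarrow> Poly_Mapping.keys p \<subseteq> {0}"

definition inK :: "'k::zero mpoly \<Rightarrow> bool" where
  "inK p \<longleftrightarrow> inK1 p \<and> degree (Poly_Mapping.lookup p 0) = 0"

definition plcm :: "'k::field_gcd poly \<Rightarrow> 'k poly \<Rightarrow> 'k poly" where
  "plcm a b = a * b div gcd a b"

definition spoly :: "(mon \<Rightarrow> mon \<Rightarrow> bool) \<Rightarrow> 'k::field_gcd mpoly \<Rightarrow> 'k mpoly \<Rightarrow> 'k mpoly" where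
  "spoly ord f g =
     (let m = plcm (lc ord f) (lc ord g); \<gamma> = mlcm (lm ord f) (lm ord g) in
      Poly_Mapping.single (\<gamma> - lm ord f) (m div lc ord f) * f
      - Poly_Mapping.single (\<gamma> - lm ord g) (m div lc ord g) * g)"

definition addnc :: "'k::zero poly \<Rightarrow> 'k poly set \<Rightarrow> 'k poly set" where
  "addnc x L = (if degree x = 0 then L else insert x L)"

(* control point of the algorithm:
   Pairs None      : applying Q to the pending pairs of the initial G
   Pairs (Some S)  : applying Q(f,r) to the pending pairs after S was divided; then S is deleted
   Loop            : head of the main while loop
   Div S h lam     : pseudo-dividing S, current h and current multiplier lam
   Done            : the algorithm has output its result *)
datatype ('p, 'c) phase = Pairs "'p option" | Loop | Div 'p 'p 'c | Done

record ('p, 'c) state =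
  stG :: "'p set"
  stLam :: "'c set"
  stS :: "'p set"
  stf0 :: "'c"
  stUsed :: "'p set set"   (* triples {f,g,h} already used in Q(ii) *)
  stPend :: "'p set set"   (* pairs {f,g} to which Q still has to be applied *)
  stPh :: "('p, 'c) phase"

definition init :: "'k::field_gcd mpoly set \<Rightarrow> ('k mpoly, 'k poly) state" where
  "init F = (let G0 = {p \<in> F. \<not> inK1 p} in
     \<lparr> stG = G0, stLam = {}, stS = {},
       stf0 = (if {p \<in> F. inK1 p} = {} then 0 else Gcd {Poly_Mapping.lookup p 0 | p. p \<in> F \<and> inK1 p}),
       stUsed = {}, stPend = {{f, g} | f g. f \<in> G0 \<and> g \<in> G0 \<and> f \<noteq> g},
       stPh = Pairs None \<rparr>)"

(* one elementary step of (any run of) the algorithm; all choices are nondeterministic *)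
inductive alg_step :: "(mon \<Rightarrow> mon \<Rightarrow> bool) \<Rightarrow> ('k::field_gcd mpoly, 'k poly) state \<Rightarrow> ('k mpoly, 'k poly) state \<Rightarrow> bool"
  for ord where
  q_coprime: "\<lbrakk> stPh s = Pairs oS; {f, g} \<in> stPend s; f \<noteq> g;
               mcoprime (lm ord f) (lm ord g) \<rbrakk> \<Longrightarrow>
     alg_step ord s (s\<lparr> stPend := stPend s - {{f, g}},
                         stLam := addnc (gcd (lc ord f) (lc ord g)) (stLam s) \<rparr>)"
| q_crit: "\<lbrakk> stPh s = Pairs oS; {f, g} \<in> stPend s; f \<noteq> g;
             \<not> mcoprime (lm ord f) (lm ord g);
             h \<in> stG s - {f, g}; mdvd (lm ord h) (mlcm (lm ord f) (lm ord g));
             {f, g, h} \<notin> stUsed s \<rbrakk> \<Longrightarrow>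
     alg_step ord s (s\<lparr> stPend := stPend s - {{f, g}},
                         stUsed := insert {f, g, h} (stUsed s),
                         stLam := addnc (lc ord h div gcd (plcm (lc ord f) (lc ord g)) (lc ord h))
                                        (stLam s) \<rparr>)"
| q_spoly: "\<lbrakk> stPh s = Pairs oS; {f, g} \<in> stPend s; f \<noteq> g;
              \<not> mcoprime (lm ord f) (lm ord g);
              \<not> (\<exists>h \<in> stG s - {f, g}. mdvd (lm ord h) (mlcm (lm ord f) (lm ord g))
                                       \<and> {f, g, h} \<notin> stUsed s) \<rbrakk> \<Longrightarrow>
     alg_step ord s (s\<lparr> stPend := stPend s - {{f, g}},
                         stS := insert (spoly ord f g) (stS s) \<rparr>)"
| pairs_init_done: "\<lbrakk> stPh s = Pairs None; stPend s = {} \<rbrakk> \<Longrightarrow>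
     alg_step ord s (s\<lparr> stPh := Loop \<rparr>)"
| pairs_post_done: "\<lbrakk> stPh s = Pairs (Some S); stPend s = {} \<rbrakk> \<Longrightarrow>
     alg_step ord s (s\<lparr> stS := stS s - {S}, stPh := Loop \<rparr>)"
| loop_pick: "\<lbrakk> stPh s = Loop; S \<in> stS s \<rbrakk> \<Longrightarrow>
     alg_step ord s (s\<lparr> stPh := Div S S 1 \<rparr>)"
| loop_final: "\<lbrakk> stPh s = Loop; stS s = {} \<rbrakk> \<Longrightarrow>
     alg_step ord s (s\<lparr> stLam := stLam s \<union>
                            {gcd (lc ord f) (stf0 s) | f. f \<in> stG s \<and> degree (gcd (lc ord f) (stf0 s)) \<noteq> 0},
                         stPh := Done \<rparr>)"
| div_red: "\<lbrakk> stPh s = Div S h lam; \<alpha> \<in> Poly_Mapping.keys h;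
             \<forall>\<beta> \<in> Poly_Mapping.keys h. (\<exists>b' \<in> stG s. mdvd (lm ord b') \<beta>) \<longrightarrow> \<beta> = \<alpha> \<or> ord \<beta> \<alpha>;
             b \<in> stG s; mdvd (lm ord b) \<alpha>;
             c = Poly_Mapping.lookup h \<alpha>; m = plcm c (lc ord b); \<mu> = m div c \<rbrakk> \<Longrightarrow>
     alg_step ord s (s\<lparr> stPh := Div S (Poly_Mapping.single 0 \<mu> * h
                                        - Poly_Mapping.single (\<alpha> - lm ord b) (m div lc ord b) * b)
                                   (lam * \<mu>) \<rparr>)"
| div_end_new: "\<lbrakk> stPh s = Div S r lam; \<forall>\<beta> \<in> Poly_Mapping.keys r. \<not> (\<exists>b \<in> stG s. mdvd (lm ord b) \<beta>);
                 \<not> inK1 r \<rbrakk> \<Longrightarrow>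
     alg_step ord s (s\<lparr> stLam := addnc lam (stLam s),
                         stG := insert r (stG s),
                         stPend := {{f, r} | f. f \<in> stG s \<and> f \<noteq> r},
                         stPh := Pairs (Some S) \<rparr>)"
| div_end_K1: "\<lbrakk> stPh s = Div S r lam; \<forall>\<beta> \<in> Poly_Mapping.keys r. \<not> (\<exists>b \<in> stG s. mdvd (lm ord b) \<beta>);
                inK1 r; degree (Poly_Mapping.lookup r 0) \<noteq> 0 \<rbrakk> \<Longrightarrow>
     alg_step ord s (s\<lparr> stLam := addnc lam (stLam s),
                         stf0 := gcd (Poly_Mapping.lookup r 0) (stf0 s),
                         stS := stS s - {S}, stPh := Loop \<rparr>)"
| div_end_K: "\<lbrakk> stPh s = Div S r lam; \<forall>\<beta> \<in> Poly_Mapping.keys r. \<not> (\<exists>b \<in> stG s. mdvd (lm ord b) \<beta>);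
               inK r \<rbrakk> \<Longrightarrow>
     alg_step ord s (s\<lparr> stLam := addnc lam (stLam s),
                         stS := stS s - {S}, stPh := Loop \<rparr>)"

end

theory Submission
  imports Defs
begin

lemma lookup_single_mult:
  fixes b :: "'k::field mpoly"
  shows "Poly_Mapping.lookup (Poly_Mapping.single d k * b) (d + x) = k * Poly_Mapping.lookup b x"
  by (simp add: lookup_mult lookup_single when_mult mult_when Sum_any_right_distrib when_when)

lemma lookup_single0_mult:
  fixes b :: "'k::field mpoly"
  shows "Poly_Mapping.lookup (Poly_Mapping.single 0 k * b) x = k * Poly_Mapping.lookup b x"
  using lookup_single_mult[of 0 k b x] by simp

lemma keys_single_mult:
  fixes b :: "'k::field mpoly"
  shows "Poly_Mapping.keys (Poly_Mapping.single d k * b) \<subseteq> (\<lambda>x. d + x) ` Poly_Mapping.keys b"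
  using keys_mult[of "Poly_Mapping.single d k" b] by (auto split: if_splits)

lemma mo_irrefl: "monomial_order ord \<Longrightarrow> \<not> ord a a"
  unfolding monomial_order_def by blast
lemma mo_trans: "monomial_order ord \<Longrightarrow> ord a b \<Longrightarrow> ord b c \<Longrightarrow> ord a c"
  unfolding monomial_order_def by blast
lemma mo_total: "monomial_order ord \<Longrightarrow> a \<noteq> b \<Longrightarrow> ord a b \<or> ord b a"
  unfolding monomial_order_def by blast
lemma mo_add: "monomial_order ord \<Longrightarrow> ord a b \<Longrightarrow> ord (a + c) (b + c)"
  unfolding monomial_order_def by blast
lemma mo_zero: "monomial_order ord \<Longrightarrow> a \<noteq> 0 \<Longrightarrow> ord 0 a"
  unfolding monomial_order_def by blast

lemma ex_max:
  assumes mo: "monomial_order ord" and "finite A" "A \<noteq> {}"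
  shows "\<exists>m\<in>A. \<forall>m'\<in>A. m' \<noteq> m \<longrightarrow> ord m' m"
  using assms(2,3)
proof (induction A rule: finite_ne_induct)
  case (singleton x) then show ?case by simp
next
  case (insert x F)
  then obtain m where m: "m \<in> F" "\<forall>m'\<in>F. m' \<noteq> m \<longrightarrow> ord m' m" by blast
  show ?case
  proof (cases "ord x m")
    case True then show ?thesis using m by auto
  next
    case False
    have "x \<noteq> m" using m(1) insert.hyps by blast
    then have omx: "ord m x" using mo_total[OF mo, of x m] False by auto
    have "\<forall>m'\<in>insert x F. m' \<noteq> x \<longrightarrow> ord m' x"
    proof (intro ballI impI)
      fix m' assume "m' \<in> insert x F" "m' \<noteq> x"
      then have "m' \<in> F" by blast
      then show "ord m' x" using m(2) omx mo_trans[OF mo] by (cases "m' = m") auto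
    qed
    then show ?thesis by blast
  qed
qed

lemma lm_prop:
  fixes p :: "'k::zero mpoly"
  assumes mo: "monomial_order ord" and "p \<noteq> 0"
  shows "lm ord p \<in> Poly_Mapping.keys p \<and> (\<forall>m'\<in>Poly_Mapping.keys p. m' \<noteq> lm ord p \<longrightarrow> ord m' (lm ord p))"
proof -
  have "Poly_Mapping.keys p \<noteq> {}" using assms(2) by simp
  then obtain m where m: "m \<in> Poly_Mapping.keys p" "\<forall>m'\<in>Poly_Mapping.keys p. m' \<noteq> m \<longrightarrow> ord m' m"
    using ex_max[OF mo finite_keys[of p]] by blast
  have "lm ord p = m" unfolding lm_def
  proof (rule the_equality)
    show "m \<in> Poly_Mapping.keys p \<and> (\<forall>m'\<in>Poly_Mapping.keys p. m' \<noteq> m \<longrightarrow> ord m' m)" using m by blast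
  next
    fix m2 assume "m2 \<in> Poly_Mapping.keys p \<and> (\<forall>m'\<in>Poly_Mapping.keys p. m' \<noteq> m2 \<longrightarrow> ord m' m2)"
    then have h: "m2 \<in> Poly_Mapping.keys p" "\<forall>m'\<in>Poly_Mapping.keys p. m' \<noteq> m2 \<longrightarrow> ord m' m2" by blast+
    show "m2 = m"
    proof (rule ccontr)
      assume "m2 \<noteq> m"
      then have "ord m2 m" "ord m m2" using h m by auto
      then show False using mo_irrefl[OF mo] mo_trans[OF mo] by blast
    qed
  qed
  then show ?thesis using m by simp
qed

lemma lc_nz: "monomial_order ord \<Longrightarrow> p \<noteq> 0 \<Longrightarrow> lc ord p \<noteq> 0"
proof -
  assume "monomial_order ord" "p \<noteq> 0"
  then have "lm ord p \<in> Poly_Mapping.keys p" using lm_prop[of ord p] by blast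
  then show ?thesis unfolding lc_def in_keys_iff .
qed

lemma nat_mono_sub:
  fixes s :: "nat \<Rightarrow> nat"
  shows "\<exists>g::nat\<Rightarrow>nat. strict_mono g \<and> (\<forall>i j. i \<le> j \<longrightarrow> s (g i) \<le> s (g j))"
proof -
  obtain f where f: "strict_mono f" "monoseq (\<lambda>n. s (f n))" using seq_monosub by blast
  show ?thesis
  proof (cases "\<forall>m n. m \<le> n \<longrightarrow> s (f m) \<le> s (f n)")
    case True
    have "strict_mono f \<and> (\<forall>i j. i \<le> j \<longrightarrow> s (f i) \<le> s (f j))" using f(1) True by blast
    then show ?thesis by blast
  next
    case False
    then have dec: "\<forall>m n. m \<le> n \<longrightarrow> s (f n) \<le> s (f m)" using f(2) unfolding monoseq_def by blast
    obtain N where N: "\<forall>n. s (f N) \<le> s (f n)"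
      using ex_has_least_nat[of "\<lambda>_. True" 0 "\<lambda>n. s (f n)"] by blast
    have "strict_mono (\<lambda>n. f (n + N))" using f(1) unfolding strict_mono_def by simp
    moreover have "\<forall>i j. i \<le> j \<longrightarrow> s (f (i + N)) \<le> s (f (j + N))"
    proof (intro allI impI)
      fix i j :: nat
      have "s (f (i + N)) \<le> s (f N)" using dec by simp
      also have "\<dots> \<le> s (f (j + N))" using N by blast
      finally show "s (f (i + N)) \<le> s (f (j + N))" .
    qed
    ultimately have "strict_mono (\<lambda>n. f (n + N)) \<and> (\<forall>i j. i \<le> j \<longrightarrow> s (f (i + N)) \<le> s (f (j + N)))" by blast
    then show ?thesis by blast
  qed
qed

lemma dickson_sub:
  fixes h :: "nat \<Rightarrow> nat \<Rightarrow> nat"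
  assumes "finite V"
  shows "\<exists>g::nat\<Rightarrow>nat. strict_mono g \<and> (\<forall>i j. i \<le> j \<longrightarrow> (\<forall>v\<in>V. h (g i) v \<le> h (g j) v))"
  using assms
proof (induction V rule: finite_induct)
  case empty
  show ?case by (rule exI[of _ "id::nat\<Rightarrow>nat"]) (simp add: strict_mono_def)
next
  case (insert v V)
  then obtain g :: "nat \<Rightarrow> nat" where g: "strict_mono g" "\<forall>i j. i \<le> j \<longrightarrow> (\<forall>v\<in>V. h (g i) v \<le> h (g j) v)" by blast
  obtain g2 :: "nat \<Rightarrow> nat" where g2: "strict_mono g2" "\<forall>i j. i \<le> j \<longrightarrow> h (g (g2 i)) v \<le> h (g (g2 j)) v"
    using nat_mono_sub[of "\<lambda>n. h (g n) v"] by blast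
  have "strict_mono (g \<circ> g2)" using g(1) g2(1) by (simp add: strict_mono_def)
  moreover have "\<forall>i j. i \<le> j \<longrightarrow> (\<forall>w\<in>insert v V. h ((g \<circ> g2) i) w \<le> h ((g \<circ> g2) j) w)"
  proof (intro allI impI ballI)
    fix i j w assume ij: "(i::nat) \<le> j" and w: "w \<in> insert v V"
    have "g2 i \<le> g2 j" using strict_mono_less_eq[OF g2(1)] ij by blast
    then show "h ((g \<circ> g2) i) w \<le> h ((g \<circ> g2) j) w"
      using w g(2) g2(2) ij by auto
  qed
  ultimately have "strict_mono (g \<circ> g2) \<and> (\<forall>i j. i \<le> j \<longrightarrow> (\<forall>w\<in>insert v V. h ((g \<circ> g2) i) w \<le> h ((g \<circ> g2) j) w))" by blast
  then show ?case by (rule exI[of _ "g \<circ> g2"])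
qed

lemma dickson:
  fixes f :: "nat \<Rightarrow> mon"
  assumes "finite V" "\<And>i. Poly_Mapping.keys (f i) \<subseteq> V"
  shows "\<exists>i j. i < j \<and> mdvd (f i) (f j)"
proof -
  obtain g :: "nat \<Rightarrow> nat" where g: "strict_mono g" "\<forall>i j. i \<le> j \<longrightarrow> (\<forall>v\<in>V. Poly_Mapping.lookup (f (g i)) v \<le> Poly_Mapping.lookup (f (g j)) v)"
    using dickson_sub[OF assms(1), of "\<lambda>i v. Poly_Mapping.lookup (f i) v"] by blast
  have "mdvd (f (g 0)) (f (g 1))" unfolding mdvd_def
  proof
    fix v show "Poly_Mapping.lookup (f (g 0)) v \<le> Poly_Mapping.lookup (f (g 1)) v"
    proof (cases "v \<in> V")
      case True then show ?thesis using g(2) by simp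
    next
      case False then have "v \<notin> Poly_Mapping.keys (f (g 0))" using assms(2) by blast
      then show ?thesis by (simp add: in_keys_iff)
    qed
  qed
  moreover have "g 0 < g 1" using g(1) by (simp add: strict_mono_def)
  ultimately show ?thesis by blast
qed

lemma mdvd_add: "mdvd a b \<Longrightarrow> b = a + (b - a)"
  unfolding mdvd_def by (intro poly_mapping_eqI) (simp add: lookup_add lookup_minus)

lemma mdvd_ord: assumes mo: "monomial_order ord" and "mdvd a b" shows "a = b \<or> ord a b"
proof -
  have b: "b = a + (b - a)" using mdvd_add[OF assms(2)] .
  show ?thesis
  proof (cases "b - a = 0")
    case True then show ?thesis using b by simp
  next
    case False
    then have "ord (0 + a) ((b - a) + a)" using mo_add[OF mo mo_zero[OF mo False]] by blast
    then show ?thesis using b by (simp add: add.commute)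
  qed
qed

definition MV :: "nat set \<Rightarrow> mon set" where "MV V = {m. Poly_Mapping.keys m \<subseteq> V}"

lemma wf_ordV:
  assumes mo: "monomial_order ord" and fin: "finite V"
  shows "wf {(a, b). ord a b \<and> a \<in> MV V \<and> b \<in> MV V}"
proof -
  { fix f :: "nat \<Rightarrow> mon" assume ch: "\<forall>i. (f (Suc i), f i) \<in> {(a, b). ord a b \<and> a \<in> MV V \<and> b \<in> MV V}"
    then have k: "\<And>i. Poly_Mapping.keys (f i) \<subseteq> V" by (auto simp: MV_def)
    have desc: "i < j \<Longrightarrow> ord (f j) (f i)" for i j
    proof (induction j)
      case 0 then show ?case by simp
    next
      case (Suc j)
      have "ord (f (Suc j)) (f j)" using ch by blast
      show ?case
      proof (cases "i = j")
        case True then show ?thesis using \<open>ord (f (Suc j)) (f j)\<close> by simp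
      next
        case False then have "i < j" using Suc.prems by simp
        then show ?thesis using Suc.IH \<open>ord (f (Suc j)) (f j)\<close> mo_trans[OF mo] by blast
      qed
    qed
    obtain i j where "i < j" "mdvd (f i) (f j)" using dickson[OF fin k] by blast
    then have o: "ord (f j) (f i)" and d: "f i = f j \<or> ord (f i) (f j)" using desc[of i j] mdvd_ord[OF mo, of "f i" "f j"] by blast+
    from d have False
    proof
      assume "f i = f j" then show False using o mo_irrefl[OF mo] by simp
    next
      assume "ord (f i) (f j)" then show False using o mo_irrefl[OF mo] mo_trans[OF mo] by blast
    qed
  }
  then show ?thesis unfolding wf_iff_no_infinite_down_chain by blast
qed


lemma MV_add: "a \<in> MV V \<Longrightarrow> b \<in> MV V \<Longrightarrow> a + b \<in> MV V"
  unfolding MV_def using keys_add[of a b] by blast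

lemma MV_diff: "a \<in> MV V \<Longrightarrow> a - b \<in> MV V"
  unfolding MV_def by (auto simp: in_keys_iff lookup_minus)

lemma MV_mlcm: "a \<in> MV V \<Longrightarrow> b \<in> MV V \<Longrightarrow> mlcm a b \<in> MV V"
  unfolding mlcm_def by (intro MV_add MV_diff)

lemma keys_smult_MV:
  fixes b :: "'k::field mpoly"
  assumes "d \<in> MV V" "Poly_Mapping.keys b \<subseteq> MV V"
  shows "Poly_Mapping.keys (Poly_Mapping.single d k * b) \<subseteq> MV V"
  using keys_single_mult[of d k b] assms MV_add by blast

lemma keys_diff_MV:
  fixes a b :: "'k::field mpoly"
  assumes "Poly_Mapping.keys a \<subseteq> MV V" "Poly_Mapping.keys b \<subseteq> MV V"
  shows "Poly_Mapping.keys (a - b) \<subseteq> MV V"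
  using keys_diff[of a b] assms by blast

lemma inK1_nz: "\<not> inK1 p \<Longrightarrow> p \<noteq> 0"
  unfolding inK1_def by auto

lemma lm_MV:
  fixes p :: "'k::zero mpoly"
  assumes "monomial_order ord" "p \<noteq> 0" "Poly_Mapping.keys p \<subseteq> MV V"
  shows "lm ord p \<in> MV V"
  using lm_prop[OF assms(1,2)] assms(3) by blast

lemma spoly_MV:
  fixes f g :: "'k::field_gcd mpoly"
  assumes mo: "monomial_order ord" and "f \<noteq> 0" "g \<noteq> 0"
    and "Poly_Mapping.keys f \<subseteq> MV V" "Poly_Mapping.keys g \<subseteq> MV V"
  shows "Poly_Mapping.keys (spoly ord f g) \<subseteq> MV V"
proof -
  have lf: "lm ord f \<in> MV V" and lg: "lm ord g \<in> MV V" using lm_MV[OF mo] assms by blast+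
  have gm: "mlcm (lm ord f) (lm ord g) \<in> MV V" using MV_mlcm[OF lf lg] .
  have d1: "mlcm (lm ord f) (lm ord g) - lm ord f \<in> MV V" using MV_diff[OF gm] .
  have d2: "mlcm (lm ord f) (lm ord g) - lm ord g \<in> MV V" using MV_diff[OF gm] .
  show ?thesis unfolding spoly_def Let_def
    using keys_diff_MV[OF keys_smult_MV[OF d1 assms(4)] keys_smult_MV[OF d2 assms(5)]] .
qed

definition Inv :: "nat set \<Rightarrow> ('k::field_gcd mpoly, 'k poly) state \<Rightarrow> bool" where
  "Inv V s \<longleftrightarrow>
     finite (stG s) \<and> (\<forall>g\<in>stG s. \<not> inK1 g \<and> Poly_Mapping.keys g \<subseteq> MV V) \<and>
     finite (stS s) \<and> (\<forall>p\<in>stS s. Poly_Mapping.keys p \<subseteq> MV V) \<and>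
     finite (stPend s) \<and> (\<forall>P\<in>stPend s. P \<subseteq> stG s) \<and>
     (\<forall>S h lam. stPh s = Div S h lam \<longrightarrow> S \<in> stS s \<and> Poly_Mapping.keys h \<subseteq> MV V)"

lemma InvD:
  assumes "Inv V s"
  shows "finite (stG s)" "\<And>g. g \<in> stG s \<Longrightarrow> \<not> inK1 g" "\<And>g. g \<in> stG s \<Longrightarrow> Poly_Mapping.keys g \<subseteq> MV V"
    "finite (stS s)" "\<And>p. p \<in> stS s \<Longrightarrow> Poly_Mapping.keys p \<subseteq> MV V"
    "finite (stPend s)" "\<And>P. P \<in> stPend s \<Longrightarrow> P \<subseteq> stG s"
    "\<And>S h lam. stPh s = Div S h lam \<Longrightarrow> S \<in> stS s"
    "\<And>S h lam. stPh s = Div S h lam \<Longrightarrow> Poly_Mapping.keys h \<subseteq> MV V"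
  using assms unfolding Inv_def by auto

lemma Inv_step:
  fixes s s' :: "('k::field_gcd mpoly, 'k poly) state"
  assumes mo: "monomial_order ord" and inv: "Inv V s" and st: "alg_step ord s s'"
  shows "Inv V s'"
  using st
proof cases
  case (q_coprime oS f g)
  then show ?thesis using inv unfolding Inv_def by auto
next
  case (q_crit oS f g h)
  then show ?thesis using inv unfolding Inv_def by auto
next
  case (q_spoly oS f g)
  have fg: "f \<in> stG s" "g \<in> stG s" using InvD(7)[OF inv q_spoly(3)] by auto
  have "Poly_Mapping.keys (spoly ord f g) \<subseteq> MV V"
    using spoly_MV[OF mo inK1_nz[OF InvD(2)[OF inv fg(1)]] inK1_nz[OF InvD(2)[OF inv fg(2)]] InvD(3)[OF inv fg(1)] InvD(3)[OF inv fg(2)]] .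
  then show ?thesis using q_spoly inv unfolding Inv_def by auto
next
  case pairs_init_done
  then show ?thesis using inv unfolding Inv_def by auto
next
  case (pairs_post_done S)
  then show ?thesis using inv unfolding Inv_def by auto
next
  case (loop_pick S)
  then show ?thesis using inv unfolding Inv_def by auto
next
  case loop_final
  then show ?thesis using inv unfolding Inv_def by auto
next
  case (div_red S h lam \<alpha> b c m \<mu>)
  have hk: "Poly_Mapping.keys h \<subseteq> MV V" and S: "S \<in> stS s" using InvD(8,9)[OF inv div_red(2)] by blast+
  have bk: "Poly_Mapping.keys b \<subseteq> MV V" "b \<noteq> 0" using InvD(2,3)[OF inv div_red(5)] inK1_nz by blast+
  have a: "\<alpha> \<in> MV V" using hk div_red(3) by blast
  have z: "(0::mon) \<in> MV V" by (simp add: MV_def)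
  have "Poly_Mapping.keys (Poly_Mapping.single 0 \<mu> * h - Poly_Mapping.single (\<alpha> - lm ord b) (m div lc ord b) * b) \<subseteq> MV V"
    using keys_diff_MV[OF keys_smult_MV[OF z hk] keys_smult_MV[OF MV_diff[OF a] bk(1)]] .
  then show ?thesis using div_red inv S unfolding Inv_def by auto
next
  case (div_end_new S r lam)
  have hk: "Poly_Mapping.keys r \<subseteq> MV V" using InvD(9)[OF inv div_end_new(2)] .
  have fin: "finite {{f, r} |f. f \<in> stG s \<and> f \<noteq> r}"
  proof -
    have "{{f, r} |f. f \<in> stG s \<and> f \<noteq> r} \<subseteq> (\<lambda>f. {f, r}) ` stG s" by blast
    then show ?thesis using finite_subset[OF _ finite_imageI[OF InvD(1)[OF inv]]] by blast
  qed
  show ?thesis using div_end_new inv hk fin unfolding Inv_def by auto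
next
  case (div_end_K1 S r lam)
  then show ?thesis using inv unfolding Inv_def by auto
next
  case (div_end_K S r lam)
  then show ?thesis using inv unfolding Inv_def by auto
qed


lemma plcm_dvd:
  fixes c l :: "'k::field_gcd poly"
  shows "c dvd plcm c l" "l dvd plcm c l"
proof -
  have "plcm c l = c * (l div gcd c l)" unfolding plcm_def using div_mult_swap[of "gcd c l" l c] by simp
  then show "c dvd plcm c l" by simp
  have "plcm c l = l * (c div gcd c l)" unfolding plcm_def using div_mult_swap[of "gcd c l" c l]
    by (simp add: mult.commute)
  then show "l dvd plcm c l" by simp
qed

lemma div_keys:
  fixes h b :: "'k::field_gcd mpoly"
  assumes mo: "monomial_order ord" and a: "\<alpha> \<in> Poly_Mapping.keys h" and bnz: "b \<noteq> 0"
    and dv: "mdvd (lm ord b) \<alpha>" and c: "c = Poly_Mapping.lookup h \<alpha>"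
    and m: "m = plcm c (lc ord b)" and mu: "\<mu> = m div c"
    and be: "\<beta> \<in> Poly_Mapping.keys (Poly_Mapping.single 0 \<mu> * h
               - Poly_Mapping.single (\<alpha> - lm ord b) (m div lc ord b) * b)"
  shows "(\<beta> \<in> Poly_Mapping.keys h \<and> \<beta> \<noteq> \<alpha>) \<or> ord \<beta> \<alpha>"
proof -
  define d where "d = \<alpha> - lm ord b"
  have ad: "\<alpha> = d + lm ord b" using mdvd_add[OF dv] unfolding d_def by (simp add: add.commute)
  have lmb: "lm ord b \<in> Poly_Mapping.keys b" "\<forall>m'\<in>Poly_Mapping.keys b. m' \<noteq> lm ord b \<longrightarrow> ord m' (lm ord b)"
    using lm_prop[OF mo bnz] by blast+
  have l1: "Poly_Mapping.lookup (Poly_Mapping.single 0 \<mu> * h) \<alpha> = m"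
    using lookup_single0_mult[of \<mu> h \<alpha>] c mu m plcm_dvd(1)[where c=c and l="lc ord b"] by simp
  have l2: "Poly_Mapping.lookup (Poly_Mapping.single d (m div lc ord b) * b) \<alpha> = m"
    using lookup_single_mult[of d "m div lc ord b" b "lm ord b"] ad m plcm_dvd(2)[where c=c and l="lc ord b"]
    unfolding lc_def by simp
  have "Poly_Mapping.lookup (Poly_Mapping.single 0 \<mu> * h - Poly_Mapping.single d (m div lc ord b) * b) \<alpha> = 0"
    using l1 l2 by (simp add: lookup_minus)
  then have z: "\<alpha> \<notin> Poly_Mapping.keys (Poly_Mapping.single 0 \<mu> * h - Poly_Mapping.single d (m div lc ord b) * b)"
    unfolding in_keys_iff by simp
  have be': "\<beta> \<in> Poly_Mapping.keys (Poly_Mapping.single 0 \<mu> * h - Poly_Mapping.single d (m div lc ord b) * b)"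
    using be unfolding d_def .
  have bna: "\<beta> \<noteq> \<alpha>" using z be' by metis
  have "\<beta> \<in> Poly_Mapping.keys (Poly_Mapping.single 0 \<mu> * h) \<or> \<beta> \<in> Poly_Mapping.keys (Poly_Mapping.single d (m div lc ord b) * b)"
    using keys_diff[of "Poly_Mapping.single 0 \<mu> * h" "Poly_Mapping.single d (m div lc ord b) * b"] be' by blast
  then show ?thesis
  proof
    assume "\<beta> \<in> Poly_Mapping.keys (Poly_Mapping.single 0 \<mu> * h)"
    then have "\<beta> \<in> Poly_Mapping.keys h" using keys_single_mult[of 0 \<mu> h] by auto
    then show ?thesis using bna by blast
  next
    assume "\<beta> \<in> Poly_Mapping.keys (Poly_Mapping.single d (m div lc ord b) * b)"
    then obtain x where x: "x \<in> Poly_Mapping.keys b" "\<beta> = d + x" using keys_single_mult[of d _ b] by blast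
    have "x \<noteq> lm ord b" using x(2) ad bna by blast
    then have "ord x (lm ord b)" using lmb x(1) by blast
    then have "ord (x + d) (lm ord b + d)" using mo_add[OF mo] by blast
    then show ?thesis using x(2) ad by (simp add: add.commute)
  qed
qed


definition ispairs :: "('p, 'c) state \<Rightarrow> nat" where
  "ispairs s = (case stPh s of Pairs _ \<Rightarrow> 1 | _ \<Rightarrow> 0)"
definition isloop :: "('p, 'c) state \<Rightarrow> nat" where
  "isloop s = (case stPh s of Loop \<Rightarrow> 1 | _ \<Rightarrow> 0)"
definition redset :: "(mon \<Rightarrow> mon \<Rightarrow> bool) \<Rightarrow> ('k::zero mpoly, 'c) state \<Rightarrow> mon set" where
  "redset ord s = (case stPh s of Div S h lam \<Rightarrow> {\<beta> \<in> Poly_Mapping.keys h. \<exists>b\<in>stG s. mdvd (lm ord b) \<beta>} | _ \<Rightarrow> {})"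
definition DR :: "(mon \<Rightarrow> mon \<Rightarrow> bool) \<Rightarrow> nat set \<Rightarrow> (mon set \<times> mon set) set" where
  "DR ord V = {(A', A). A \<subseteq> MV V \<and> (\<exists>\<alpha>\<in>A. \<forall>\<beta>\<in>A'. ord \<beta> \<alpha>)}"

lemma wf_DR:
  assumes mo: "monomial_order ord" and fin: "finite V"
  shows "wf (DR ord V)"
proof -
  { fix f :: "nat \<Rightarrow> mon set" assume ch: "\<forall>i. (f (Suc i), f i) \<in> DR ord V"
    then have "\<forall>i. \<exists>a. a \<in> f i \<and> f i \<subseteq> MV V \<and> (\<forall>\<beta>\<in>f (Suc i). ord \<beta> a)" unfolding DR_def by blast
    then obtain a where a: "\<forall>i. a i \<in> f i \<and> f i \<subseteq> MV V \<and> (\<forall>\<beta>\<in>f (Suc i). ord \<beta> (a i))"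
      using choice[of "\<lambda>i a. a \<in> f i \<and> f i \<subseteq> MV V \<and> (\<forall>\<beta>\<in>f (Suc i). ord \<beta> a)"] by blast
    have "\<forall>i. (a (Suc i), a i) \<in> {(x, y). ord x y \<and> x \<in> MV V \<and> y \<in> MV V}"
    proof
      fix i
      have "a (Suc i) \<in> f (Suc i)" "f (Suc i) \<subseteq> MV V" "a i \<in> f i" "f i \<subseteq> MV V" using a by blast+
      moreover have "ord (a (Suc i)) (a i)" using a by blast
      ultimately show "(a (Suc i), a i) \<in> {(x, y). ord x y \<and> x \<in> MV V \<and> y \<in> MV V}" by blast
    qed
    then have False using wf_ordV[OF mo fin] unfolding wf_iff_no_infinite_down_chain by blast
  }
  then show ?thesis unfolding wf_iff_no_infinite_down_chain by blast
qed

definition Rel :: "(mon \<Rightarrow> mon \<Rightarrow> bool) \<Rightarrow> nat set \<Rightarrow> (('k::zero mpoly, 'c) state \<times> ('k mpoly, 'c) state) set" where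
  "Rel ord V = inv_image (less_than <*lex*> less_than <*lex*> less_than <*lex*> less_than <*lex*> DR ord V)
     (\<lambda>s. (ispairs s, card (stPend s), card (stS s), isloop s, redset ord s))"

lemma wf_Rel: "monomial_order ord \<Longrightarrow> finite V \<Longrightarrow> wf (Rel ord V)"
  unfolding Rel_def by (intro wf_inv_image wf_lex_prod wf_less_than wf_DR)

lemma step_desc:
  fixes s s' :: "('k::field_gcd mpoly, 'k poly) state"
  assumes mo: "monomial_order ord" and inv: "Inv V s" and st: "alg_step ord s s'"
    and G: "stG s' = stG s"
  shows "(s', s) \<in> Rel ord V"
  using st
proof cases
  case (q_coprime oS f g)
  have "card (stPend s') < card (stPend s)" using q_coprime card_Diff1_less[OF InvD(6)[OF inv]] by simp
  then show ?thesis using q_coprime unfolding Rel_def by (simp add: ispairs_def)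
next
  case (q_crit oS f g h)
  have "card (stPend s') < card (stPend s)" using q_crit card_Diff1_less[OF InvD(6)[OF inv]] by simp
  then show ?thesis using q_crit unfolding Rel_def by (simp add: ispairs_def)
next
  case (q_spoly oS f g)
  have "card (stPend s') < card (stPend s)" using q_spoly card_Diff1_less[OF InvD(6)[OF inv]] by simp
  then show ?thesis using q_spoly unfolding Rel_def by (simp add: ispairs_def)
next
  case pairs_init_done
  then show ?thesis unfolding Rel_def by (simp add: ispairs_def)
next
  case (pairs_post_done S)
  then show ?thesis unfolding Rel_def by (simp add: ispairs_def)
next
  case (loop_pick S)
  then show ?thesis unfolding Rel_def by (simp add: ispairs_def isloop_def)
next
  case loop_final
  then show ?thesis unfolding Rel_def by (simp add: ispairs_def isloop_def)
next
  case (div_red S h lam \<alpha> b c m \<mu>)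
  have hk: "Poly_Mapping.keys h \<subseteq> MV V" using InvD(9)[OF inv div_red(2)] .
  have bnz: "b \<noteq> 0" using InvD(2)[OF inv div_red(5)] inK1_nz by blast
  have r1: "redset ord s = {\<beta> \<in> Poly_Mapping.keys h. \<exists>b\<in>stG s. mdvd (lm ord b) \<beta>}"
    using div_red(2) unfolding redset_def by simp
  have r2: "redset ord s' = {\<beta> \<in> Poly_Mapping.keys (Poly_Mapping.single 0 \<mu> * h
               - Poly_Mapping.single (\<alpha> - lm ord b) (m div lc ord b) * b). \<exists>b\<in>stG s. mdvd (lm ord b) \<beta>}"
    using div_red(1) unfolding redset_def by simp
  have "(redset ord s', redset ord s) \<in> DR ord V"
    unfolding DR_def
  proof (intro CollectI case_prodI conjI bexI ballI)
    show "redset ord s \<subseteq> MV V" using r1 hk by blast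
    show "\<alpha> \<in> redset ord s" using r1 div_red(3,5,6) by blast
    fix \<beta> assume "\<beta> \<in> redset ord s'"
    then have be: "\<beta> \<in> Poly_Mapping.keys (Poly_Mapping.single 0 \<mu> * h
               - Poly_Mapping.single (\<alpha> - lm ord b) (m div lc ord b) * b)" and red: "\<exists>b\<in>stG s. mdvd (lm ord b) \<beta>"
      using r2 by blast+
    have "(\<beta> \<in> Poly_Mapping.keys h \<and> \<beta> \<noteq> \<alpha>) \<or> ord \<beta> \<alpha>"
      using div_keys[OF mo div_red(3) bnz div_red(6,7,8,9) be] .
    then show "ord \<beta> \<alpha>" using div_red(4) red by blast
  qed
  then show ?thesis using div_red unfolding Rel_def by (simp add: ispairs_def isloop_def)
next
  case (div_end_new S r lam)
  have "r \<in> stG s" using div_end_new G by auto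
  moreover have "r \<noteq> 0" using inK1_nz div_end_new(4) .
  then have "lm ord r \<in> Poly_Mapping.keys r" using lm_prop[OF mo] by blast
  moreover have "mdvd (lm ord r) (lm ord r)" unfolding mdvd_def by simp
  ultimately show ?thesis using div_end_new(3) by blast
next
  case (div_end_K1 S r lam)
  have "card (stS s') < card (stS s)" using div_end_K1 card_Diff1_less[OF InvD(4)[OF inv] InvD(8)[OF inv div_end_K1(2)]] by simp
  then show ?thesis using div_end_K1 unfolding Rel_def by (simp add: ispairs_def)
next
  case (div_end_K S r lam)
  have "card (stS s') < card (stS s)" using div_end_K card_Diff1_less[OF InvD(4)[OF inv] InvD(8)[OF inv div_end_K(2)]] by simp
  then show ?thesis using div_end_K unfolding Rel_def by (simp add: ispairs_def)
qed

lemma G_mono: "alg_step ord s s' \<Longrightarrow> stG s \<subseteq> stG s'"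
  by (induction rule: alg_step.induct) auto

lemma G_new: "alg_step ord s s' \<Longrightarrow> r \<in> stG s' \<Longrightarrow> r \<notin> stG s \<Longrightarrow>
   \<forall>\<beta>\<in>Poly_Mapping.keys r. \<not> (\<exists>b\<in>stG s. mdvd (lm ord b) \<beta>)"
  by (induction rule: alg_step.induct) auto


lemma Inv_init:
  fixes F :: "'k::field_gcd mpoly set"
  assumes "finite F"
  shows "Inv (\<Union>p\<in>F. \<Union>m\<in>Poly_Mapping.keys p. Poly_Mapping.keys m) (init F)"
proof -
  define G0 where "G0 = {p \<in> F. \<not> inK1 p}"
  have fG: "finite G0" using assms unfolding G0_def by simp
  have P: "{{f, g} | f g. f \<in> G0 \<and> g \<in> G0 \<and> f \<noteq> g} \<subseteq> Pow G0" by blast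
  have fP: "finite {{f, g} | f g. f \<in> G0 \<and> g \<in> G0 \<and> f \<noteq> g}"
    using finite_subset[OF P] fG by simp
  show ?thesis
    unfolding Inv_def init_def Let_def G0_def[symmetric]
    using fG fP by (auto simp: G0_def MV_def)
qed

theorem lemma3p8:
  fixes ord :: "mon \<Rightarrow> mon \<Rightarrow> bool"
    and F :: "'k::field_gcd mpoly set"
  assumes "monomial_order ord"
    and "finite F"
    and "\<forall>p \<in> F. \<not> inK p"
  shows "\<not> (\<exists>run :: nat \<Rightarrow> ('k mpoly, 'k poly) state.
              run 0 = init F \<and> (\<forall>i. alg_step ord (run i) (run (Suc i))))"
proof
  note mo = assms(1)
  assume "\<exists>run :: nat \<Rightarrow> ('k mpoly, 'k poly) state.
              run 0 = init F \<and> (\<forall>i. alg_step ord (run i) (run (Suc i)))"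
  then obtain run :: "nat \<Rightarrow> ('k mpoly, 'k poly) state"
    where r0: "run 0 = init F" and rs: "\<And>i. alg_step ord (run i) (run (Suc i))" by blast
  define V where "V = (\<Union>p\<in>F. \<Union>m\<in>Poly_Mapping.keys p. Poly_Mapping.keys m)"
  have finV: "finite V" unfolding V_def using assms(2) by simp
  have inv: "Inv V (run i)" for i
  proof (induction i)
    case 0 then show ?case using Inv_init[OF assms(2)] r0 unfolding V_def by simp
  next
    case (Suc i) then show ?case using Inv_step[OF mo _ rs] by blast
  qed
  have mono: "i \<le> j \<Longrightarrow> stG (run i) \<subseteq> stG (run j)" for i j
    using lift_Suc_mono_le[of "\<lambda>i. stG (run i)"] G_mono[OF rs] by blast
  define X where "X = {i. stG (run (Suc i)) \<noteq> stG (run i)}"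
  show False
  proof (cases "finite X")
    case True
    then obtain N where N: "\<forall>n\<in>X. n < N" using finite_nat_set_iff_bounded by blast
    have "\<forall>i. (run (Suc i + N), run (i + N)) \<in> Rel ord V"
    proof
      fix i
      have "i + N \<notin> X" using N by fastforce
      then have "stG (run (Suc (i + N))) = stG (run (i + N))" unfolding X_def by blast
      then show "(run (Suc i + N), run (i + N)) \<in> Rel ord V"
        using step_desc[OF mo inv rs] by simp
    qed
    then have c: "\<forall>i. (run (Suc (i + N)), run (i + N)) \<in> Rel ord V" by simp
    define f where "f = (\<lambda>i. run (i + N))"
    have "\<forall>i. (f (Suc i), f i) \<in> Rel ord V" unfolding f_def using c by simp
    then show False using wf_Rel[OF mo finV] unfolding wf_iff_no_infinite_down_chain by blast
  next
    case False
    define t where "t = enumerate X"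
    have tX: "t k \<in> X" for k unfolding t_def using enumerate_in_set[OF False] .
    have smt: "strict_mono t" unfolding t_def using strict_mono_enumerate[OF False] .
    have "\<exists>r. r \<in> stG (run (Suc (t k))) \<and> r \<notin> stG (run (t k))" for k
      using tX[of k] mono[of "t k" "Suc (t k)"] unfolding X_def by auto
    then obtain r where r: "\<And>k. r k \<in> stG (run (Suc (t k))) \<and> r k \<notin> stG (run (t k))"
      by metis
    have rnz: "r k \<noteq> 0" for k using InvD(2)[OF inv] r inK1_nz by blast
    have rk: "Poly_Mapping.keys (r k) \<subseteq> MV V" for k using InvD(3)[OF inv] r by blast
    have lmk: "lm ord (r k) \<in> Poly_Mapping.keys (r k)" for k using lm_prop[OF mo rnz] by blast
    have "Poly_Mapping.keys (lm ord (r k)) \<subseteq> V" for k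
      using lm_MV[OF mo rnz rk] unfolding MV_def by blast
    then obtain i j where ij: "i < j" "mdvd (lm ord (r i)) (lm ord (r j))"
      using dickson[OF finV, of "\<lambda>k. lm ord (r k)"] by blast
    have "Suc (t i) \<le> t j" using smt ij(1) by (simp add: strict_mono_def Suc_le_eq)
    then have "r i \<in> stG (run (t j))" using mono r by blast
    moreover have "\<forall>\<beta>\<in>Poly_Mapping.keys (r j). \<not> (\<exists>b\<in>stG (run (t j)). mdvd (lm ord b) \<beta>)"
      using G_new[OF rs] r by blast
    ultimately show False using ij(2) lmk by blast
  qed
qed

end
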